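(* Let $\mathcal M=(\mathcal S,\mathcal A,P,r,\gamma)$, $\mathcal Z$, $\{\sigma_t\}_{t\ge1}$, $\hat f$, $\mathfrak F$ be as in the context, and suppose the features $Z_t=\sigma_t(H_t)$ form an $(\epsilon,\delta)$-approximate information state with respect to $\mathfrak F$, with AIS approximator $(\hat r,\hat P)$. Let $\hat V$ be the solution of the AIS dynamic program, $\mu$ a policy greedy with respect to $\hat Q$, and $\pi=(\pi_t)_{t\ge1}$, $\pi_t=\mu\circ\sigma_t$, the induced history-based policy. Then $$\Delta:=\sup_{t\ge1}\ \sup_{h_t\in\mathcal H_t}\big|V^\star(s_t)-V^{\pi}_t(h_t)\big|\ \le\ \frac{2\big(\epsilon+\gamma\,\delta\,\kappa_{\mathfrak F}(\hat V,\hat f)\big)}{1-\gamma},$$ where $\kappa_{\mathfrak F}(\hat V,\hat f)=\sup_{z\in\mathcal Z,\,a\in\mathcal A}\rho_{\mathfrak F}\big(s\mapsto \hat V(\hat f(z,s,a))\big)$ and $s_t$ denotes the last state of $h_t$.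
   Context: MDP: $\mathcal M=(\mathcal S,\mathcal A,P,r,\gamma)$ with finite state space $\mathcal S$, finite action space $\mathcal A$, transition kernel $P(s'\mid s,a)$, bounded reward $r:\mathcal S\times\mathcal A\to\mathbb R$, discount $\gamma\in(0,1)$. $V^\star(s)$ is the optimal value: the supremum over all (randomised, possibly history-dependent) policies of $\mathbb E[\sum_{k\ge1}\gamma^{k-1}r(S_k,A_k)\mid S_1=s]$. A history at time $t$ is $h_t=(s_{1:t},a_{1:t-1})\in\mathcal H_t=\mathcal S^t\times\mathcal A^{t-1}$. Feature abstraction: $\mathcal Z$ is a set; maps $\sigma_t:\mathcal H_t\to\mathcal Z$ are recursively updatable, i.e. there is $\hat f:\mathcal Z\times\mathcal S\times\mathcal A\to\mathcal Z$ with $\sigma_{t+1}(s_{1:t+1},a_{1:t})=\hat f(\sigma_t(s_{1:t},a_{1:t-1}),s_{t+1},a_t)$ for all $t\ge1$. IPM: $\mathfrak F$ is a class of real functions on $\mathcal S$; for $\nu_1,\nu_2\in\Delta(\mathcal S)$, $d_{\mathfrak F}(\nu_1,\nu_2)=\sup_{g\in\mathfrak F}|\sum_s g(s)\nu_1(s)-\sum_s g(s)\nu_2(s)|$; the Minkowski functional is $\rho_{\mathfrak F}(g)=\inf\{\rho\ge0:\rho^{-1}g\in\mathfrak F\}$ (with $\inf\emptyset=+\infty$). AIS: the features are an $(\epsilon,\delta)$-AIS w.r.t. $\mathfrak F$ if there exist a bounded $\hat r:\mathcal Z\times\mathcal A\to\mathbb R$ and $\hat P:\mathcal Z\times\mathcal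 A\to\Delta(\mathcal S)$ (the AIS approximator) such that for all $t$, all $h_t\in\mathcal H_t$ and all $a\in\mathcal A$: $|r(s_t,a)-\hat r(\sigma_t(h_t),a)|\le\epsilon$ and $d_{\mathfrak F}(P(\cdot\mid s_t,a),\hat P(\cdot\mid\sigma_t(h_t),a))\le\delta$. AIS dynamic program: $\hat V:\mathcal Z\to\mathbb R$ is the unique bounded function satisfying $\hat V(z)=\max_{a}\hat Q(z,a)$, where $\hat Q(z,a)=\hat r(z,a)+\gamma\sum_{s'\in\mathcal S}\hat P(s'\mid z,a)\hat V(\hat f(z,s',a))$. A policy $\mu:\mathcal Z\to\Delta(\mathcal A)$ is greedy if $\mathrm{supp}\,\mu(z)\subseteq\arg\max_a\hat Q(z,a)$ for all $z$. Value of the history-based policy: $V^{\pi}_t(h_t)=\mathbb E[\sum_{k\ge t}\gamma^{k-t}r(S_k,A_k)]$ where the process starts at time $t$ from state $s_t$ with feature $Z_t=\sigma_t(h_t)$, actions are drawn as $A_k\sim\mu(Z_k)$, $S_{k+1}\sim P(\cdot\mid S_k,A_k)$, and $Z_{k+1}=\hat f(Z_k,S_{k+1},A_k)$. *)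

theory Defs
  imports "HOL-Probability.Probability_Mass_Function" "HOL-Library.Extended_Real"
begin

text \<open>Histories h_t = (s_1, [(a_1,s_2), ..., (a_{t-1},s_t)]); the time index is
  t = length of the list + 1. Every value of this type is a valid history.\<close>
type_synonym ('s,'a) hist = "'s \<times> ('a \<times> 's) list"

definition last_state :: "('s,'a) hist \<Rightarrow> 's" where
  "last_state h = (if snd h = [] then fst h else snd (last (snd h)))"

definition ext_hist :: "('s,'a) hist \<Rightarrow> 'a \<Rightarrow> 's \<Rightarrow> ('s,'a) hist" where
  "ext_hist h a s' = (fst h, snd h @ [(a, s')])"

fun hist_val :: "('s::finite \<Rightarrow> 'a::finite \<Rightarrow> 's pmf) \<Rightarrow> ('s \<Rightarrow> 'a \<Rightarrow> real) \<Rightarrow> real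
    \<Rightarrow> (('s,'a) hist \<Rightarrow> 'a pmf) \<Rightarrow> nat \<Rightarrow> ('s,'a) hist \<Rightarrow> real" where
  "hist_val P r \<gamma> pol 0 h = 0"
| "hist_val P r \<gamma> pol (Suc n) h =
     (\<Sum>a\<in>UNIV. pmf (pol h) a * (r (last_state h) a
        + \<gamma> * (\<Sum>s'\<in>UNIV. pmf (P (last_state h) a) s' * hist_val P r \<gamma> pol n (ext_hist h a s'))))"

definition policy_value :: "('s::finite \<Rightarrow> 'a::finite \<Rightarrow> 's pmf) \<Rightarrow> ('s \<Rightarrow> 'a \<Rightarrow> real) \<Rightarrow> real
    \<Rightarrow> (('s,'a) hist \<Rightarrow> 'a pmf) \<Rightarrow> 's \<Rightarrow> real" where
  "policy_value P r \<gamma> pol s = lim (\<lambda>n. hist_val P r \<gamma> pol n (s, []))"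

definition Vstar :: "('s::finite \<Rightarrow> 'a::finite \<Rightarrow> 's pmf) \<Rightarrow> ('s \<Rightarrow> 'a \<Rightarrow> real) \<Rightarrow> real \<Rightarrow> 's \<Rightarrow> real" where
  "Vstar P r \<gamma> s = (SUP pol. policy_value P r \<gamma> pol s)"

fun feat_val :: "('s::finite \<Rightarrow> 'a::finite \<Rightarrow> 's pmf) \<Rightarrow> ('s \<Rightarrow> 'a \<Rightarrow> real) \<Rightarrow> real
    \<Rightarrow> ('z \<Rightarrow> 's \<Rightarrow> 'a \<Rightarrow> 'z) \<Rightarrow> ('z \<Rightarrow> 'a pmf) \<Rightarrow> nat \<Rightarrow> 's \<Rightarrow> 'z \<Rightarrow> real" where
  "feat_val P r \<gamma> fhat mu 0 s z = 0"
| "feat_val P r \<gamma> fhat mu (Suc n) s z =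
     (\<Sum>a\<in>UNIV. pmf (mu z) a * (r s a
        + \<gamma> * (\<Sum>s'\<in>UNIV. pmf (P s a) s' * feat_val P r \<gamma> fhat mu n s' (fhat z s' a))))"

definition induced_value :: "('s::finite \<Rightarrow> 'a::finite \<Rightarrow> 's pmf) \<Rightarrow> ('s \<Rightarrow> 'a \<Rightarrow> real) \<Rightarrow> real
    \<Rightarrow> ('z \<Rightarrow> 's \<Rightarrow> 'a \<Rightarrow> 'z) \<Rightarrow> ('z \<Rightarrow> 'a pmf) \<Rightarrow> (('s,'a) hist \<Rightarrow> 'z) \<Rightarrow> ('s,'a) hist \<Rightarrow> real" where
  "induced_value P r \<gamma> fhat mu \<sigma> h = lim (\<lambda>n. feat_val P r \<gamma> fhat mu n (last_state h) (\<sigma> h))"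

text \<open>Integral probability metric (extended-real valued, so that it is +infinity when unbounded).\<close>
definition ipm :: "('s::finite \<Rightarrow> real) set \<Rightarrow> 's pmf \<Rightarrow> 's pmf \<Rightarrow> ereal" where
  "ipm F \<nu>1 \<nu>2 = (SUP g\<in>F. ereal \<bar>(\<Sum>s\<in>UNIV. g s * pmf \<nu>1 s) - (\<Sum>s\<in>UNIV. g s * pmf \<nu>2 s)\<bar>)"

text \<open>Minkowski functional, with inf of the empty set = +infinity.\<close>
definition minkowski :: "('s \<Rightarrow> real) set \<Rightarrow> ('s \<Rightarrow> real) \<Rightarrow> ereal" where
  "minkowski F g = Inf {ereal \<rho> | \<rho>. \<rho> > 0 \<and> (\<lambda>s. g s / \<rho>) \<in> F}"

definition kappa :: "('s \<Rightarrow> real) set \<Rightarrow> ('z \<Rightarrow> real) \<Rightarrow> ('z \<Rightarrow> 's \<Rightarrow> 'a \<Rightarrow> 'z) \<Rightarrow> ereal" where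
  "kappa F Vh fhat = (SUP za\<in>UNIV. minkowski F (\<lambda>s. Vh (fhat (fst za) s (snd za))))"

definition Qhat :: "real \<Rightarrow> ('z \<Rightarrow> 'a \<Rightarrow> real) \<Rightarrow> ('z \<Rightarrow> 'a \<Rightarrow> 's::finite pmf)
    \<Rightarrow> ('z \<Rightarrow> 's \<Rightarrow> 'a \<Rightarrow> 'z) \<Rightarrow> ('z \<Rightarrow> real) \<Rightarrow> 'z \<Rightarrow> 'a \<Rightarrow> real" where
  "Qhat \<gamma> rhat Phat fhat Vh z a = rhat z a + \<gamma> * (\<Sum>s'\<in>UNIV. pmf (Phat z a) s' * Vh (fhat z s' a))"

end

theory Submission imports Defs begin

lemma pmf_sum_le:
  fixes p :: "'x::finite pmf"
  assumes "\<And>x. x \<in> set_pmf p \<Longrightarrow> f x \<le> c"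
  shows "(\<Sum>x\<in>UNIV. pmf p x * f x) \<le> c"
proof -
  have "(\<Sum>x\<in>UNIV. pmf p x * f x) \<le> (\<Sum>x\<in>UNIV. pmf p x * c)"
  proof (rule sum_mono)
    fix x show "pmf p x * f x \<le> pmf p x * c"
      using assms[of x] by (cases "x \<in> set_pmf p") (auto simp: set_pmf_eq mult_left_mono)
  qed
  also have "\<dots> = c" by (simp add: sum_distrib_right[symmetric] sum_pmf_eq_1)
  finally show ?thesis .
qed

lemma pmf_sum_ge:
  fixes p :: "'x::finite pmf"
  assumes "\<And>x. x \<in> set_pmf p \<Longrightarrow> c \<le> f x"
  shows "c \<le> (\<Sum>x\<in>UNIV. pmf p x * f x)"
proof -
  have "(\<Sum>x\<in>UNIV. pmf p x * c) \<le> (\<Sum>x\<in>UNIV. pmf p x * f x)"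
  proof (rule sum_mono)
    fix x show "pmf p x * c \<le> pmf p x * f x"
      using assms[of x] by (cases "x \<in> set_pmf p") (auto simp: set_pmf_eq mult_left_mono)
  qed
  moreover have "(\<Sum>x\<in>UNIV. pmf p x * c) = c" by (simp add: sum_distrib_right[symmetric] sum_pmf_eq_1)
  ultimately show ?thesis by simp
qed

lemma pmf_sum_mono:
  fixes p :: "'x::finite pmf"
  assumes "\<And>x. f x \<le> g x"
  shows "(\<Sum>x\<in>UNIV. pmf p x * f x) \<le> (\<Sum>x\<in>UNIV. pmf p x * g x)"
  by (rule sum_mono) (simp add: assms mult_left_mono)

lemma pmf_sum_add:
  fixes p :: "'x::finite pmf"
  shows "(\<Sum>x\<in>UNIV. pmf p x * (f x + c)) = (\<Sum>x\<in>UNIV. pmf p x * f x) + c"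
  by (simp add: distrib_left sum.distrib sum_distrib_right[symmetric] sum_pmf_eq_1)

lemma pmf_sum_abs:
  fixes p :: "'x::finite pmf"
  assumes "\<And>x. \<bar>f x\<bar> \<le> c"
  shows "\<bar>\<Sum>x\<in>UNIV. pmf p x * f x\<bar> \<le> c"
proof -
  have "(\<Sum>x\<in>UNIV. pmf p x * f x) \<le> c" by (rule pmf_sum_le) (metis assms abs_le_D1)
  moreover have "-c \<le> (\<Sum>x\<in>UNIV. pmf p x * f x)" by (rule pmf_sum_ge) (metis assms abs_le_D2 minus_le_iff)
  ultimately show ?thesis by linarith
qed

lemma hist_val_diff:
  fixes P :: "'s::finite \<Rightarrow> 'a::finite \<Rightarrow> 's pmf"
  assumes R: "\<And>s a. \<bar>r s a\<bar> \<le> R" and g: "0 \<le> \<gamma>"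
  shows "\<bar>hist_val P r \<gamma> pol (Suc n) h - hist_val P r \<gamma> pol n h\<bar> \<le> \<gamma>^n * R"
proof (induction n arbitrary: h)
  case 0
  show ?case using R by (simp add: pmf_sum_abs)
next
  case (Suc n)
  have eq: "hist_val P r \<gamma> pol (Suc (Suc n)) h - hist_val P r \<gamma> pol (Suc n) h =
    (\<Sum>a\<in>UNIV. pmf (pol h) a * (\<gamma> * (\<Sum>s'\<in>UNIV. pmf (P (last_state h) a) s' *
       (hist_val P r \<gamma> pol (Suc n) (ext_hist h a s') - hist_val P r \<gamma> pol n (ext_hist h a s')))))"
    unfolding hist_val.simps(2)[of P r \<gamma> pol "Suc n" h] hist_val.simps(2)[of P r \<gamma> pol n h] sum_subtractf[symmetric]
  proof (rule sum.cong[OF refl])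
    fix a
    have "(\<Sum>s'\<in>UNIV. pmf (P (last_state h) a) s' * hist_val P r \<gamma> pol (Suc n) (ext_hist h a s'))
       - (\<Sum>s'\<in>UNIV. pmf (P (last_state h) a) s' * hist_val P r \<gamma> pol n (ext_hist h a s'))
      = (\<Sum>s'\<in>UNIV. pmf (P (last_state h) a) s' *
       (hist_val P r \<gamma> pol (Suc n) (ext_hist h a s') - hist_val P r \<gamma> pol n (ext_hist h a s')))"
      by (simp add: sum_subtractf[symmetric] right_diff_distrib)
    then show "pmf (pol h) a * (r (last_state h) a + \<gamma> * (\<Sum>s'\<in>UNIV. pmf (P (last_state h) a) s' * hist_val P r \<gamma> pol (Suc n) (ext_hist h a s')))
      - pmf (pol h) a * (r (last_state h) a + \<gamma> * (\<Sum>s'\<in>UNIV. pmf (P (last_state h) a) s' * hist_val P r \<gamma> pol n (ext_hist h a s')))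
      = pmf (pol h) a * (\<gamma> * (\<Sum>s'\<in>UNIV. pmf (P (last_state h) a) s' *
       (hist_val P r \<gamma> pol (Suc n) (ext_hist h a s') - hist_val P r \<gamma> pol n (ext_hist h a s'))))"
      by (simp add: algebra_simps)
  qed
  show ?case unfolding eq
  proof (rule pmf_sum_abs)
    fix a
    have "\<bar>\<Sum>s'\<in>UNIV. pmf (P (last_state h) a) s' *
       (hist_val P r \<gamma> pol (Suc n) (ext_hist h a s') - hist_val P r \<gamma> pol n (ext_hist h a s'))\<bar> \<le> \<gamma>^n * R"
      by (rule pmf_sum_abs) (rule Suc.IH)
    then show "\<bar>\<gamma> * (\<Sum>s'\<in>UNIV. pmf (P (last_state h) a) s' *
       (hist_val P r \<gamma> pol (Suc n) (ext_hist h a s') - hist_val P r \<gamma> pol n (ext_hist h a s')))\<bar> \<le> \<gamma>^Suc n * R"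
      using g by (simp only: abs_mult abs_of_nonneg power_Suc mult.assoc mult_left_mono)
  qed
qed

lemma hist_val_conv:
  fixes P :: "'s::finite \<Rightarrow> 'a::finite \<Rightarrow> 's pmf"
  assumes g: "0 \<le> \<gamma>" "\<gamma> < 1"
  shows "convergent (\<lambda>n. hist_val P r \<gamma> pol n h)"
proof -
  define R where "R = (\<Sum>x\<in>UNIV. \<bar>r (fst x) (snd x)\<bar>)"
  have R: "\<bar>r s a\<bar> \<le> R" for s a
    unfolding R_def using member_le_sum[of "(s,a)" UNIV "\<lambda>x. \<bar>r (fst x) (snd x)\<bar>"] by simp
  define X where "X n = hist_val P r \<gamma> pol n h" for n
  have "summable (\<lambda>n. X (Suc n) - X n)"
  proof (rule summable_comparison_test)
    show "\<exists>N. \<forall>n\<ge>N. norm (X (Suc n) - X n) \<le> \<gamma>^n * R"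
      using hist_val_diff[where r=r and R=R, OF R g(1)] by (auto simp: X_def)
    show "summable (\<lambda>n. \<gamma>^n * R)" using g by (simp add: summable_mult2 summable_geometric)
  qed
  then have "(\<lambda>n. \<Sum>i<n. X (Suc i) - X i) \<longlonglongrightarrow> suminf (\<lambda>n. X (Suc n) - X n)"
    by (rule summable_LIMSEQ)
  then have "(\<lambda>n. X n - X 0) \<longlonglongrightarrow> suminf (\<lambda>n. X (Suc n) - X n)"
    by (simp add: sum_lessThan_telescope)
  then have "(\<lambda>n. X n - X 0 + X 0) \<longlonglongrightarrow> suminf (\<lambda>n. X (Suc n) - X n) + X 0"
    by (intro tendsto_intros)
  then show ?thesis unfolding X_def[symmetric] convergent_def by auto
qed


definition hjoin :: "('s,'a) hist \<Rightarrow> ('s,'a) hist \<Rightarrow> ('s,'a) hist" where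
  "hjoin h g = (fst h, snd h @ snd g)"

lemma last_state_hjoin: "last_state h = fst g \<Longrightarrow> last_state (hjoin h g) = last_state g"
  by (auto simp: last_state_def hjoin_def)

lemma hjoin_ext: "hjoin h (ext_hist g a s') = ext_hist (hjoin h g) a s'"
  by (simp add: hjoin_def ext_hist_def)

lemma fst_ext[simp]: "fst (ext_hist g a s') = fst g"
  by (simp add: ext_hist_def)

lemma last_state_ext[simp]: "last_state (ext_hist g a s') = s'"
  by (simp add: ext_hist_def last_state_def)

lemma hjoin_nil: "hjoin h (s, []) = h"
  by (simp add: hjoin_def)

lemma nil_hjoin: "fst g = s \<Longrightarrow> hjoin (s, []) g = g"
  by (cases g) (simp add: hjoin_def)

lemma upper_bound:
  fixes P :: "'s::finite \<Rightarrow> 'a::finite \<Rightarrow> 's pmf"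
  assumes g: "0 \<le> \<gamma>"
    and recursive: "\<And>h a s'. \<sigma> (ext_hist h a s') = fhat (\<sigma> h) s' a"
    and ar: "\<And>h a. r (last_state h) a \<le> rhat (\<sigma> h) a + \<epsilon>"
    and aP: "\<And>h a. (\<Sum>s\<in>UNIV. pmf (P (last_state h) a) s * Vh (fhat (\<sigma> h) s a))
               \<le> (\<Sum>s\<in>UNIV. pmf (Phat (\<sigma> h) a) s * Vh (fhat (\<sigma> h) s a)) + D"
    and Q: "\<And>z a. Qhat \<gamma> rhat Phat fhat Vh z a \<le> Vh z"
    and B: "\<And>z. -B \<le> Vh z" and C: "0 \<le> C" and CB: "0 \<le> B"
    and CC: "\<epsilon> + \<gamma> * D + \<gamma> * C = C"
  shows "\<forall>g. fst g = last_state h \<longrightarrow>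
     hist_val P r \<gamma> pol n g \<le> Vh (\<sigma> (hjoin h g)) + C + \<gamma>^n * B"
proof (induction n)
  case 0
  show ?case using B C by (auto simp: algebra_simps) (smt (verit) B)
next
  case (Suc n)
  show ?case
  proof (intro allI impI)
    fix g :: "('s,'a) hist" assume fg: "fst g = last_state h"
    define z where "z = \<sigma> (hjoin h g)"
    define K where "K = C + \<gamma>^n * B"
    have ls: "last_state (hjoin h g) = last_state g" using last_state_hjoin fg by metis
    have ext: "\<sigma> (hjoin h (ext_hist g a s')) = fhat z s' a" for a s'
      unfolding hjoin_ext z_def by (rule recursive)
    have IH: "hist_val P r \<gamma> pol n (ext_hist g a s') \<le> Vh (fhat z s' a) + K" for a s'
      using Suc.IH[rule_format, of "ext_hist g a s'"] fg ext[of a s'] by (simp add: K_def add.assoc)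
    have per: "r (last_state g) a + \<gamma> * (\<Sum>s'\<in>UNIV. pmf (P (last_state g) a) s' *
       hist_val P r \<gamma> pol n (ext_hist g a s')) \<le> Vh z + (\<epsilon> + \<gamma> * D + \<gamma> * K)" for a
    proof -
      have "(\<Sum>s'\<in>UNIV. pmf (P (last_state g) a) s' * hist_val P r \<gamma> pol n (ext_hist g a s'))
          \<le> (\<Sum>s'\<in>UNIV. pmf (P (last_state g) a) s' * (Vh (fhat z s' a) + K))"
        by (rule pmf_sum_mono) (rule IH)
      also have "\<dots> = (\<Sum>s'\<in>UNIV. pmf (P (last_state g) a) s' * Vh (fhat z s' a)) + K"
        by (rule pmf_sum_add)
      also have "\<dots> \<le> (\<Sum>s\<in>UNIV. pmf (Phat z a) s * Vh (fhat z s a)) + D + K"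
        using aP[of "hjoin h g" a] unfolding ls z_def by simp
      finally have s1: "(\<Sum>s'\<in>UNIV. pmf (P (last_state g) a) s' * hist_val P r \<gamma> pol n (ext_hist g a s'))
          \<le> (\<Sum>s\<in>UNIV. pmf (Phat z a) s * Vh (fhat z s a)) + D + K" .
      have r1: "r (last_state g) a \<le> rhat z a + \<epsilon>" using ar[of "hjoin h g" a] unfolding ls z_def .
      have q: "rhat z a + \<gamma> * (\<Sum>s\<in>UNIV. pmf (Phat z a) s * Vh (fhat z s a)) \<le> Vh z"
        using Q[of z a] by (simp add: Qhat_def)
      have "\<gamma> * (\<Sum>s'\<in>UNIV. pmf (P (last_state g) a) s' * hist_val P r \<gamma> pol n (ext_hist g a s'))
          \<le> \<gamma> * ((\<Sum>s\<in>UNIV. pmf (Phat z a) s * Vh (fhat z s a)) + D + K)"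
        using s1 g by (rule mult_left_mono)
      then show ?thesis using r1 q by (simp add: algebra_simps)
    qed
    have "hist_val P r \<gamma> pol (Suc n) g \<le> Vh z + (\<epsilon> + \<gamma> * D + \<gamma> * K)"
      unfolding hist_val.simps by (rule pmf_sum_le) (rule per)
    also have "\<epsilon> + \<gamma> * D + \<gamma> * K = C + \<gamma>^Suc n * B"
      using CC unfolding K_def by (simp add: algebra_simps)
    finally show "hist_val P r \<gamma> pol (Suc n) g \<le> Vh (\<sigma> (hjoin h g)) + C + \<gamma>^Suc n * B"
      by (simp add: z_def add.assoc)
  qed
qed

lemma lower_bound:
  fixes P :: "'s::finite \<Rightarrow> 'a::finite \<Rightarrow> 's pmf"
  assumes g: "0 \<le> \<gamma>"
    and recursive: "\<And>h a s'. \<sigma> (ext_hist h a s') = fhat (\<sigma> h) s' a"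
    and ar: "\<And>h a. rhat (\<sigma> h) a - \<epsilon> \<le> r (last_state h) a"
    and aP: "\<And>h a. (\<Sum>s\<in>UNIV. pmf (Phat (\<sigma> h) a) s * Vh (fhat (\<sigma> h) s a)) - D
               \<le> (\<Sum>s\<in>UNIV. pmf (P (last_state h) a) s * Vh (fhat (\<sigma> h) s a))"
    and Q: "\<And>z a. a \<in> set_pmf (mu z) \<Longrightarrow> Vh z \<le> Qhat \<gamma> rhat Phat fhat Vh z a"
    and B: "\<And>z. Vh z \<le> B" and C: "0 \<le> C" and CB: "0 \<le> B"
    and CC: "\<epsilon> + \<gamma> * D + \<gamma> * C = C"
    and pol: "\<And>g. fst g = last_state h \<Longrightarrow> pol g = mu (\<sigma> (hjoin h g))"
  shows "\<forall>g. fst g = last_state h \<longrightarrow>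
     Vh (\<sigma> (hjoin h g)) - C - \<gamma>^n * B \<le> hist_val P r \<gamma> pol n g"
proof (induction n)
  case 0
  show ?case using B C by (auto simp: algebra_simps) (smt (verit) B)
next
  case (Suc n)
  show ?case
  proof (intro allI impI)
    fix g :: "('s,'a) hist" assume fg: "fst g = last_state h"
    define z where "z = \<sigma> (hjoin h g)"
    define K where "K = C + \<gamma>^n * B"
    have ls: "last_state (hjoin h g) = last_state g" using last_state_hjoin fg by metis
    have ext: "\<sigma> (hjoin h (ext_hist g a s')) = fhat z s' a" for a s'
      unfolding hjoin_ext z_def by (rule recursive)
    have IH: "Vh (fhat z s' a) - K \<le> hist_val P r \<gamma> pol n (ext_hist g a s')" for a s'
      using Suc.IH[rule_format, of "ext_hist g a s'"] fg ext[of a s'] by (simp add: K_def algebra_simps)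
    have per: "Vh z - (\<epsilon> + \<gamma> * D + \<gamma> * K) \<le> r (last_state g) a + \<gamma> * (\<Sum>s'\<in>UNIV. pmf (P (last_state g) a) s' *
       hist_val P r \<gamma> pol n (ext_hist g a s'))" if aa: "a \<in> set_pmf (mu z)" for a
    proof -
      have "(\<Sum>s\<in>UNIV. pmf (Phat z a) s * Vh (fhat z s a)) - D - K \<le>
           (\<Sum>s'\<in>UNIV. pmf (P (last_state g) a) s' * Vh (fhat z s' a)) - K"
        using aP[of "hjoin h g" a] unfolding ls z_def by simp
      also have "(\<Sum>s'\<in>UNIV. pmf (P (last_state g) a) s' * Vh (fhat z s' a)) - K
          = (\<Sum>s'\<in>UNIV. pmf (P (last_state g) a) s' * (Vh (fhat z s' a) + - K))"
        by (simp only: pmf_sum_add)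
      also have "\<dots> \<le> (\<Sum>s'\<in>UNIV. pmf (P (last_state g) a) s' * hist_val P r \<gamma> pol n (ext_hist g a s'))"
        by (rule pmf_sum_mono) (use IH in simp)
      finally have s1: "(\<Sum>s\<in>UNIV. pmf (Phat z a) s * Vh (fhat z s a)) - D - K \<le>
          (\<Sum>s'\<in>UNIV. pmf (P (last_state g) a) s' * hist_val P r \<gamma> pol n (ext_hist g a s'))" .
      have r1: "rhat z a - \<epsilon> \<le> r (last_state g) a" using ar[of "hjoin h g" a] unfolding ls z_def .
      have q: "Vh z \<le> rhat z a + \<gamma> * (\<Sum>s\<in>UNIV. pmf (Phat z a) s * Vh (fhat z s a))"
        using Q[OF aa] by (simp add: Qhat_def)
      have "\<gamma> * ((\<Sum>s\<in>UNIV. pmf (Phat z a) s * Vh (fhat z s a)) - D - K) \<le>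
          \<gamma> * (\<Sum>s'\<in>UNIV. pmf (P (last_state g) a) s' * hist_val P r \<gamma> pol n (ext_hist g a s'))"
        using s1 g by (rule mult_left_mono)
      then show ?thesis using r1 q by (simp add: algebra_simps)
    qed
    have pg: "pol g = mu z" using pol[OF fg] by (simp add: z_def)
    have "Vh z - (\<epsilon> + \<gamma> * D + \<gamma> * K) \<le> hist_val P r \<gamma> pol (Suc n) g"
      unfolding hist_val.simps pg by (rule pmf_sum_ge) (rule per)
    moreover have "\<epsilon> + \<gamma> * D + \<gamma> * K = C + \<gamma>^Suc n * B"
      using CC unfolding K_def by (simp add: algebra_simps)
    ultimately show "Vh (\<sigma> (hjoin h g)) - C - \<gamma>^Suc n * B \<le> hist_val P r \<gamma> pol (Suc n) g"
      by (simp add: z_def algebra_simps)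
  qed
qed

lemma feat_hist:
  fixes P :: "'s::finite \<Rightarrow> 'a::finite \<Rightarrow> 's pmf"
  assumes recursive: "\<And>h a s'. \<sigma> (ext_hist h a s') = fhat (\<sigma> h) s' a"
  shows "feat_val P r \<gamma> fhat mu n (last_state g) (\<sigma> g) = hist_val P r \<gamma> (\<lambda>g. mu (\<sigma> g)) n g"
proof (induction n arbitrary: g)
  case 0 then show ?case by simp
next
  case (Suc n)
  show ?case using Suc.IH[of "ext_hist g _ _", symmetric] by (simp add: recursive)
qed


lemma lim_le_geom:
  fixes X :: "nat \<Rightarrow> real"
  assumes "convergent X" "\<And>n. X n \<le> c + \<gamma>^n * B" "0 \<le> \<gamma>" "\<gamma> < 1"
  shows "lim X \<le> c"
proof -
  have "X \<longlonglongrightarrow> lim X" using assms(1) by (simp add: convergent_LIMSEQ_iff)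
  moreover have "(\<lambda>n. c + \<gamma>^n * B) \<longlonglongrightarrow> c + 0 * B"
    using assms(3,4) by (intro tendsto_intros LIMSEQ_power_zero) auto
  ultimately show ?thesis using assms(2) by (intro LIMSEQ_le) auto
qed

lemma lim_ge_geom:
  fixes X :: "nat \<Rightarrow> real"
  assumes "convergent X" "\<And>n. c - \<gamma>^n * B \<le> X n" "0 \<le> \<gamma>" "\<gamma> < 1"
  shows "c \<le> lim X"
proof -
  have "X \<longlonglongrightarrow> lim X" using assms(1) by (simp add: convergent_LIMSEQ_iff)
  moreover have "(\<lambda>n. c - \<gamma>^n * B) \<longlonglongrightarrow> c - 0 * B"
    using assms(3,4) by (intro tendsto_intros LIMSEQ_power_zero) auto
  ultimately show ?thesis using assms(2) by (intro LIMSEQ_le) auto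
qed


theorem theorem1:
  fixes P :: "'s::finite \<Rightarrow> 'a::finite \<Rightarrow> 's pmf"
    and r :: "'s \<Rightarrow> 'a \<Rightarrow> real"
    and \<gamma> :: real
    and \<sigma> :: "('s,'a) hist \<Rightarrow> 'z"
    and fhat :: "'z \<Rightarrow> 's \<Rightarrow> 'a \<Rightarrow> 'z"
    and F :: "('s \<Rightarrow> real) set"
    and \<epsilon> \<delta> :: real
    and rhat :: "'z \<Rightarrow> 'a \<Rightarrow> real"
    and Phat :: "'z \<Rightarrow> 'a \<Rightarrow> 's pmf"
    and Vh :: "'z \<Rightarrow> real"
    and mu :: "'z \<Rightarrow> 'a pmf"
  assumes gamma: "0 < \<gamma>" "\<gamma> < 1"
    and recursive: "\<And>h a s'. \<sigma> (ext_hist h a s') = fhat (\<sigma> h) s' a"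
    and rhat_bounded: "\<exists>B. \<forall>z a. \<bar>rhat z a\<bar> \<le> B"
    and ais_r: "\<And>h a. \<bar>r (last_state h) a - rhat (\<sigma> h) a\<bar> \<le> \<epsilon>"
    and ais_P: "\<And>h a. ipm F (P (last_state h) a) (Phat (\<sigma> h) a) \<le> ereal \<delta>"
    and Vh_bounded: "\<exists>B. \<forall>z. \<bar>Vh z\<bar> \<le> B"
    and Vh_dp: "\<And>z. Vh z = (MAX a\<in>UNIV. Qhat \<gamma> rhat Phat fhat Vh z a)"
    and greedy: "\<And>z. set_pmf (mu z) \<subseteq> {a. \<forall>b. Qhat \<gamma> rhat Phat fhat Vh z b \<le> Qhat \<gamma> rhat Phat fhat Vh z a}"
  shows "kappa F Vh fhat < \<infinity> \<longrightarrow>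
    (SUP h. ereal \<bar>Vstar P r \<gamma> (last_state h) - induced_value P r \<gamma> fhat mu \<sigma> h\<bar>)
      \<le> ereal (2 * (\<epsilon> + \<gamma> * \<delta> * real_of_ereal (kappa F Vh fhat)) / (1 - \<gamma>))"
proof
  assume kfin: "kappa F Vh fhat < \<infinity>"
  obtain BV where BV: "\<And>z. \<bar>Vh z\<bar> \<le> BV" using Vh_bounded by blast
  have BV0: "0 \<le> BV" using BV[of undefined] by linarith
  have g0: "0 \<le> \<gamma>" using gamma by simp
  obtain h0 :: "('s,'a) hist" where True by simp
  have eps0: "0 \<le> \<epsilon>" using ais_r[of h0 undefined] by linarith
  define M where "M z a = minkowski F (\<lambda>s. Vh (fhat z s a))" for z a
  have Mk: "M z a \<le> kappa F Vh fhat" for z a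
    unfolding M_def kappa_def by (rule SUP_upper2[of "(z,a)"]) auto
  have Mne: "\<exists>\<rho>>0. (\<lambda>s. Vh (fhat z s a) / \<rho>) \<in> F" for z a
  proof (rule ccontr)
    assume "\<not> ?thesis"
    then have em: "{ereal \<rho> |\<rho>. \<rho> > 0 \<and> (\<lambda>s. Vh (fhat z s a) / \<rho>) \<in> F} = {}" by auto
    have "M z a = \<infinity>" unfolding M_def minkowski_def em by (simp add: top_ereal_def)
    then show False using Mk[of z a] kfin by simp
  qed
  have M0: "0 \<le> M z a" for z a
    unfolding M_def minkowski_def by (rule Inf_greatest) auto
  have k0: "0 \<le> kappa F Vh fhat" using M0[of undefined undefined] Mk[of undefined undefined] by simp
  define \<kappa> where "\<kappa> = real_of_ereal (kappa F Vh fhat)"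
  have keq: "kappa F Vh fhat = ereal \<kappa>" unfolding \<kappa>_def using k0 kfin
    by (cases "kappa F Vh fhat") auto
  have k0': "0 \<le> \<kappa>" using k0 keq by simp
  obtain \<rho>0 where "\<rho>0 > 0" "(\<lambda>s. Vh (fhat undefined s undefined) / \<rho>0) \<in> F" using Mne by blast
  then have Fne: "F \<noteq> {}" by auto
  have d0: "0 \<le> \<delta>"
  proof -
    obtain f where f: "f \<in> F" using Fne by blast
    have "ereal 0 \<le> ipm F (P (last_state h0) undefined) (Phat (\<sigma> h0) undefined)"
      unfolding ipm_def by (rule SUP_upper2[OF f]) simp
    then show ?thesis using ais_P[of h0 undefined] by (metis ereal_less_eq(3) order.trans)
  qed
  have key: "\<bar>(\<Sum>s\<in>UNIV. pmf (P (last_state h) a) s * Vh (fhat (\<sigma> h) s a))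
     - (\<Sum>s\<in>UNIV. pmf (Phat (\<sigma> h) a) s * Vh (fhat (\<sigma> h) s a))\<bar> \<le> \<delta> * \<kappa>" for h a
  proof -
    define z where "z = \<sigma> h"
    define dd where "dd = \<bar>(\<Sum>s\<in>UNIV. pmf (P (last_state h) a) s * Vh (fhat z s a))
     - (\<Sum>s\<in>UNIV. pmf (Phat z a) s * Vh (fhat z s a))\<bar>"
    have rho: "dd \<le> \<delta> * \<rho>" if \<rho>: "\<rho> > 0" "(\<lambda>s. Vh (fhat z s a) / \<rho>) \<in> F" for \<rho>
    proof -
      have e1: "(\<Sum>s\<in>UNIV. Vh (fhat z s a) / \<rho> * pmf \<nu> s) = (\<Sum>s\<in>UNIV. pmf \<nu> s * Vh (fhat z s a)) / \<rho>"
        for \<nu> :: "'s pmf" by (simp add: sum_divide_distrib mult.commute)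
      have "ereal \<bar>(\<Sum>s\<in>UNIV. Vh (fhat z s a) / \<rho> * pmf (P (last_state h) a) s)
           - (\<Sum>s\<in>UNIV. Vh (fhat z s a) / \<rho> * pmf (Phat z a) s)\<bar> \<le> ipm F (P (last_state h) a) (Phat z a)"
        unfolding ipm_def by (rule SUP_upper2[OF \<rho>(2)]) simp
      also have "\<dots> \<le> ereal \<delta>" using ais_P[of h a] by (simp add: z_def)
      finally have "\<bar>(\<Sum>s\<in>UNIV. pmf (P (last_state h) a) s * Vh (fhat z s a)) / \<rho>
           - (\<Sum>s\<in>UNIV. pmf (Phat z a) s * Vh (fhat z s a)) / \<rho>\<bar> \<le> \<delta>" unfolding e1 by simp
      then have "dd / \<rho> \<le> \<delta>" unfolding dd_def using \<rho>(1)
        by (simp add: diff_divide_distrib[symmetric])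
      then show ?thesis using \<rho>(1) by (simp add: field_simps)
    qed
    have "dd \<le> \<delta> * \<kappa>"
    proof (cases "\<delta> = 0")
      case True
      obtain \<rho> where "\<rho> > 0" "(\<lambda>s. Vh (fhat z s a) / \<rho>) \<in> F" using Mne by blast
      then show ?thesis using rho True by auto
    next
      case False
      then have dpos: "\<delta> > 0" using d0 by simp
      show ?thesis
      proof (rule ccontr)
        assume "\<not> ?thesis"
        then have "\<kappa> < dd / \<delta>" using dpos by (simp add: field_simps)
        then have "M z a < ereal (dd / \<delta>)" using Mk[of z a] keq
          by (metis ereal_less_eq(3) less_ereal.simps(1) order.strict_trans1)
        then obtain x where "x \<in> {ereal \<rho> | \<rho>. \<rho> > 0 \<and> (\<lambda>s. Vh (fhat z s a) / \<rho>) \<in> F}" "x < ereal (dd / \<delta>)"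
          unfolding M_def minkowski_def by (auto simp: Inf_less_iff)
        then obtain \<rho> where \<rho>: "\<rho> > 0" "(\<lambda>s. Vh (fhat z s a) / \<rho>) \<in> F" "\<rho> < dd / \<delta>" by auto
        then have "\<delta> * \<rho> < dd" using dpos by (simp add: field_simps)
        then show False using rho[OF \<rho>(1,2)] by simp
      qed
    qed
    then show ?thesis unfolding dd_def z_def .
  qed
  define D where "D = \<delta> * \<kappa>"
  define C where "C = (\<epsilon> + \<gamma> * D) / (1 - \<gamma>)"
  have D0: "0 \<le> D" unfolding D_def using d0 k0' by simp
  have C0: "0 \<le> C" unfolding C_def using eps0 D0 gamma by simp
  have CC: "\<epsilon> + \<gamma> * D + \<gamma> * C = C" unfolding C_def using gamma by (simp add: field_simps)
  have Qle: "Qhat \<gamma> rhat Phat fhat Vh z a \<le> Vh z" for z a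
    unfolding Vh_dp[of z] by (rule Max_ge) auto
  have Qge: "Vh z \<le> Qhat \<gamma> rhat Phat fhat Vh z a" if "a \<in> set_pmf (mu z)" for z a
  proof -
    have "Vh z \<in> range (Qhat \<gamma> rhat Phat fhat Vh z)" unfolding Vh_dp[of z] by (rule Max_in) auto
    then obtain b where "Vh z = Qhat \<gamma> rhat Phat fhat Vh z b" by auto
    then show ?thesis using greedy[of z] that by auto
  qed
  have ar1: "r (last_state h) a \<le> rhat (\<sigma> h) a + \<epsilon>" for h a using ais_r[of h a] by linarith
  have ar2: "rhat (\<sigma> h) a - \<epsilon> \<le> r (last_state h) a" for h a using ais_r[of h a] by linarith
  have aP1: "(\<Sum>s\<in>UNIV. pmf (P (last_state h) a) s * Vh (fhat (\<sigma> h) s a))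
               \<le> (\<Sum>s\<in>UNIV. pmf (Phat (\<sigma> h) a) s * Vh (fhat (\<sigma> h) s a)) + D" for h a
    using key[of h a] unfolding D_def by linarith
  have aP2: "(\<Sum>s\<in>UNIV. pmf (Phat (\<sigma> h) a) s * Vh (fhat (\<sigma> h) s a)) - D
               \<le> (\<Sum>s\<in>UNIV. pmf (P (last_state h) a) s * Vh (fhat (\<sigma> h) s a))" for h a
    using key[of h a] unfolding D_def by linarith
  have B1: "-BV \<le> Vh z" for z using BV[of z] by linarith
  have B2: "Vh z \<le> BV" for z using BV[of z] by linarith
  note UB = upper_bound[where \<gamma>=\<gamma> and \<sigma>=\<sigma> and fhat=fhat and r=r and rhat=rhat and \<epsilon>=\<epsilon> and P=P and Vh=Vh and Phat=Phat and D=D and B=BV and C=C, OF g0 recursive ar1 aP1 Qle B1 C0 BV0 CC, rule_format]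
  note LB = lower_bound[where \<gamma>=\<gamma> and \<sigma>=\<sigma> and fhat=fhat and r=r and rhat=rhat and \<epsilon>=\<epsilon> and P=P and Vh=Vh and Phat=Phat and D=D and B=BV and C=C and mu=mu, OF g0 recursive ar2 aP2 Qge B2 C0 BV0 CC, rule_format]
  have main: "\<bar>Vstar P r \<gamma> (last_state h) - induced_value P r \<gamma> fhat mu \<sigma> h\<bar> \<le> 2 * C" for h
  proof -
    define s where "s = last_state h"
    define z where "z = \<sigma> h"
    have pvU: "policy_value P r \<gamma> pol s \<le> Vh z + C" for pol
      unfolding policy_value_def
    proof (rule lim_le_geom[OF hist_val_conv[OF g0 gamma(2)] _ g0 gamma(2)])
      fix n show "hist_val P r \<gamma> pol n (s, []) \<le> Vh z + C + \<gamma>^n * BV"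
        using UB[where h=h and g="(s, [])" and pol=pol and n=n] by (simp add: s_def z_def hjoin_nil)
    qed
    define polh where "polh g = mu (\<sigma> (hjoin h g))" for g
    have pvL: "Vh z - C \<le> policy_value P r \<gamma> polh s"
      unfolding policy_value_def
    proof (rule lim_ge_geom[OF hist_val_conv[OF g0 gamma(2)] _ g0 gamma(2)])
      fix n show "Vh z - C - \<gamma>^n * BV \<le> hist_val P r \<gamma> polh n (s, [])"
        using LB[where h=h and pol=polh and g="(s, [])" and n=n] by (simp add: s_def z_def hjoin_nil polh_def)
    qed
    have bdd: "bdd_above (range (\<lambda>pol. policy_value P r \<gamma> pol s))"
      using pvU by (intro bdd_aboveI2) auto
    have VsU: "Vstar P r \<gamma> s \<le> Vh z + C"
      unfolding Vstar_def by (rule cSUP_least) (auto intro: pvU)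
    have VsL: "Vh z - C \<le> Vstar P r \<gamma> s"
      unfolding Vstar_def using pvL cSUP_upper[OF UNIV_I bdd, of polh] by linarith
    define h' :: "('s,'a) hist" where "h' = (fst h, [])"
    have lsh': "last_state h' = fst h" by (simp add: h'_def last_state_def)
    have hj: "hjoin h' h = h" by (simp add: h'_def nil_hjoin)
    have iv: "induced_value P r \<gamma> fhat mu \<sigma> h = lim (\<lambda>n. hist_val P r \<gamma> (\<lambda>g. mu (\<sigma> g)) n h)"
      unfolding induced_value_def feat_hist[where \<sigma>=\<sigma> and fhat=fhat, OF recursive] ..
    have ivU: "induced_value P r \<gamma> fhat mu \<sigma> h \<le> Vh z + C"
      unfolding iv
    proof (rule lim_le_geom[OF hist_val_conv[OF g0 gamma(2)] _ g0 gamma(2)])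
      fix n show "hist_val P r \<gamma> (\<lambda>g. mu (\<sigma> g)) n h \<le> Vh z + C + \<gamma>^n * BV"
        using UB[where h=h' and g=h and pol="\<lambda>g. mu (\<sigma> g)" and n=n] by (simp add: lsh' hj z_def)
    qed
    have ivL: "Vh z - C \<le> induced_value P r \<gamma> fhat mu \<sigma> h"
      unfolding iv
    proof (rule lim_ge_geom[OF hist_val_conv[OF g0 gamma(2)] _ g0 gamma(2)])
      fix n
      have polq: "mu (\<sigma> g) = mu (\<sigma> (hjoin h' g))" if "fst g = last_state h'" for g
      proof -
        have "hjoin h' g = g" unfolding h'_def by (rule nil_hjoin) (use that lsh' in simp)
        then show ?thesis by simp
      qed
      have L: "Vh (\<sigma> (hjoin h' h)) - C - \<gamma>^n * BV \<le> hist_val P r \<gamma> (\<lambda>g. mu (\<sigma> g)) n h"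
        apply (rule LB[where h=h' and g=h and pol="\<lambda>g. mu (\<sigma> g)" and n=n])
        apply assumption
         apply (erule polq)
        apply (simp add: lsh')
        done
      show "Vh z - C - \<gamma>^n * BV \<le> hist_val P r \<gamma> (\<lambda>g. mu (\<sigma> g)) n h"
        using L unfolding hj z_def .
    qed
    show ?thesis using VsU VsL ivU ivL unfolding s_def by linarith
  qed
  have "2 * C = 2 * (\<epsilon> + \<gamma> * \<delta> * real_of_ereal (kappa F Vh fhat)) / (1 - \<gamma>)"
    unfolding C_def D_def \<kappa>_def by (simp add: mult.assoc)
  then show "(SUP h. ereal \<bar>Vstar P r \<gamma> (last_state h) - induced_value P r \<gamma> fhat mu \<sigma> h\<bar>)
      \<le> ereal (2 * (\<epsilon> + \<gamma> * \<delta> * real_of_ereal (kappa F Vh fhat)) / (1 - \<gamma>))"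
    using main by (intro SUP_least) simp
qed

end
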